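(* Let $n\ge 1$ and $U_n$ the family of bounded subsets of $\mathbb R^n$. (a) For every function $g:\mathbb R^n\to B_2$ whose support $\mathrm{supp}\,g=\{x:g(x)=1\}$ is locally finite, the function $\mu^g:U_n\to B_2$, $\mu^g(A)=\pi(|A\cap \mathrm{supp}\,g|)$, is a derivable measure, and $d\mu^g(x)=g(x)$ for all $x\in\mathbb R^n$. (b) Conversely, if $\mu:U_n\to B_2$ is a derivable measure, then there exists a unique function $g:\mathbb R^n\to B_2$ with locally finite support such that $\mu(A)=\pi(|A\cap\mathrm{supp}\,g|)$ for all $A\in U_n$; moreover $d\mu(x)=g(x)$ for all $x\in\mathbb R^n$.
   Context: $B_2=\{0,1\}$. $H\subset\mathbb R^n$ is locally finite if $A\cap H$ is finite for every bounded $A$. $\pi(m)=1$ if $m$ is odd, $0$ if even. $\mu$ is a measure if for every sequence of pairwise disjoint sets of $U_n$ whose union is in $U_n$, only finitely many have $\mu$-value 1 and $\mu$ of the union is their number modulo 2. $d(B)=\sup_{x,y\in B}\|x-y\|$. $\mu$ is derivable at $x$ if there exist $\varepsilon>0$, $a\in B_2$ with $\mu(B)=a$ for all $B\in U_n$ containing $x$ with $d(B)<\varepsilon$; then $d\mu(x)=a$. $\mu$ is derivable if it is derivable at every point of $\mathbb R^n$. *)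

theory Defs
  imports "HOL-Analysis.Analysis"
begin

text \<open>B_2 = {0,1} is rendered as bool (True = 1). R^n is an arbitrary euclidean_space
  type 'a (DIM('a) = n \<ge> 1). U_n = bounded subsets; set functions are total on 'a set,
  but only their values on bounded sets are constrained/used.\<close>

definition loc_finite :: "'a::euclidean_space set \<Rightarrow> bool" where
  "loc_finite H \<longleftrightarrow> (\<forall>A. bounded A \<longrightarrow> finite (A \<inter> H))"

definition par :: "nat \<Rightarrow> bool" where
  "par m \<longleftrightarrow> odd m"

definition supp2 :: "('a \<Rightarrow> bool) \<Rightarrow> 'a set" where
  "supp2 g = {x. g x}"

definition b2_measure :: "('a::euclidean_space set \<Rightarrow> bool) \<Rightarrow> bool" where
  "b2_measure \<mu> \<longleftrightarrow>
     (\<forall>S :: nat \<Rightarrow> 'a set. (\<forall>i. bounded (S i)) \<and> disjoint_family S \<and> bounded (\<Union>i. S i)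
        \<longrightarrow> finite {i. \<mu> (S i)} \<and> \<mu> (\<Union>i. S i) = par (card {i. \<mu> (S i)}))"

definition b2_derivable_at :: "('a::euclidean_space set \<Rightarrow> bool) \<Rightarrow> 'a \<Rightarrow> bool" where
  "b2_derivable_at \<mu> x \<longleftrightarrow>
     (\<exists>\<epsilon>>0. \<exists>a. \<forall>B. bounded B \<and> x \<in> B \<and> diameter B < \<epsilon> \<longrightarrow> \<mu> B = a)"

definition b2_deriv :: "('a::euclidean_space set \<Rightarrow> bool) \<Rightarrow> 'a \<Rightarrow> bool" where
  "b2_deriv \<mu> x = (THE a. \<exists>\<epsilon>>0. \<forall>B. bounded B \<and> x \<in> B \<and> diameter B < \<epsilon> \<longrightarrow> \<mu> B = a)"

definition b2_derivable :: "('a::euclidean_space set \<Rightarrow> bool) \<Rightarrow> bool" where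
  "b2_derivable \<mu> \<longleftrightarrow> (\<forall>x. b2_derivable_at \<mu> x)"

definition mu_of :: "('a \<Rightarrow> bool) \<Rightarrow> 'a set \<Rightarrow> bool" where
  "mu_of g A = par (card (A \<inter> supp2 g))"

end

theory Submission
  imports Defs
begin

lemma par_add: "par (a + b) = (par a \<noteq> par b)"
  by (auto simp: par_def)

lemma par_sum_count:
  assumes "finite I"
  shows "odd (sum f I) = odd (card {i\<in>I. odd (f i :: nat)})"
  using assms
proof (induction I rule: finite_induct)
  case empty
  then show ?case by simp
next
  case (insert x F)
  have fin: "finite {i\<in>F. odd (f i)}" using insert by auto
  show ?case
  proof (cases "odd (f x)")
    case True
    then have "{i\<in>insert x F. odd (f i)} = insert x {i\<in>F. odd (f i)}" by auto
    moreover have "x \<notin> {i\<in>F. odd (f i)}" using insert by auto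
    ultimately show ?thesis using insert True fin by simp
  next
    case False
    then have "{i\<in>insert x F. odd (f i)} = {i\<in>F. odd (f i)}" by auto
    then show ?thesis using insert False by simp
  qed
qed

lemma mu_of_add:
  assumes lf: "loc_finite (supp2 g)" and "bounded A" "bounded B" "A \<inter> B = {}"
  shows "mu_of g (A \<union> B) = (mu_of g A \<noteq> mu_of g B)"
proof -
  have fA: "finite (A \<inter> supp2 g)" and fB: "finite (B \<inter> supp2 g)"
    using lf assms unfolding loc_finite_def by auto
  have "(A \<union> B) \<inter> supp2 g = (A \<inter> supp2 g) \<union> (B \<inter> supp2 g)" by auto
  then have "card ((A \<union> B) \<inter> supp2 g) = card (A \<inter> supp2 g) + card (B \<inter> supp2 g)"
    using fA fB assms(4) by (simp add: card_Un_disjoint disjoint_iff)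
  then show ?thesis by (simp add: mu_of_def par_add)
qed

lemma mu_empty:
  assumes "b2_measure \<mu>"
  shows "\<not> \<mu> {}"
proof
  assume h: "\<mu> {}"
  have "finite {i::nat. \<mu> ((\<lambda>i. ({}::'a set)) i)}"
    using assms unfolding b2_measure_def disjoint_family_on_def
    by (erule_tac x="\<lambda>i. {}" in allE) auto
  with h show False by simp
qed

lemma mu_add:
  assumes m: "b2_measure \<mu>" and "bounded A" "bounded B" "A \<inter> B = {}"
  shows "\<mu> (A \<union> B) = (\<mu> A \<noteq> \<mu> B)"
proof -
  define S :: "nat \<Rightarrow> 'a set" where "S = (\<lambda>i. if i = 0 then A else if i = 1 then B else {})"
  have bS: "\<forall>i. bounded (S i)" using assms by (auto simp: S_def)
  have dS: "disjoint_family S" using assms(4)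
    unfolding disjoint_family_on_def S_def by auto
  have U: "(\<Union>i. S i) = A \<union> B"
    unfolding S_def by (auto split: if_splits)
  have bU: "bounded (\<Union>i. S i)" using U assms by simp
  have e: "\<not> \<mu> {}" using mu_empty[OF m] .
  have eq: "\<mu> (A \<union> B) = par (card {i. \<mu> (S i)})"
    using m bS dS bU U unfolding b2_measure_def by metis
  have st: "{i. \<mu> (S i)} = (if \<mu> A then {0} else {}) \<union> (if \<mu> B then {1} else {})"
    using e by (auto simp: S_def split: if_splits)
  show ?thesis using eq st by (auto simp: par_def)
qed

lemma mu_of_single: "mu_of g {x} = g x"
proof (cases "g x")
  case True
  then have "{x} \<inter> supp2 g = {x}" by (auto simp: supp2_def)
  then show ?thesis using True by (simp add: mu_of_def par_def)
next
  case False
  then have "{x} \<inter> supp2 g = {}" by (auto simp: supp2_def)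
  then show ?thesis using False by (simp add: mu_of_def par_def)
qed

lemma deriv_eq:
  assumes "\<epsilon> > 0" "\<forall>B. bounded B \<and> x \<in> B \<and> diameter B < \<epsilon> \<longrightarrow> \<mu> B = a"
  shows "b2_deriv \<mu> x = a"
  unfolding b2_deriv_def
proof (rule the_equality)
  show "\<exists>\<epsilon>>0. \<forall>B. bounded B \<and> x \<in> B \<and> diameter B < \<epsilon> \<longrightarrow> \<mu> B = a" using assms by blast
next
  fix a' assume "\<exists>\<epsilon>>0. \<forall>B. bounded B \<and> x \<in> B \<and> diameter B < \<epsilon> \<longrightarrow> \<mu> B = a'"
  then obtain e where "e > 0" "\<forall>B. bounded B \<and> x \<in> B \<and> diameter B < e \<longrightarrow> \<mu> B = a'" by blast
  then have "\<mu> {x} = a'" by auto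
  moreover have "\<mu> {x} = a" using assms by auto
  ultimately show "a' = a" by simp
qed

lemma partA_deriv:
  fixes g :: "'a::euclidean_space \<Rightarrow> bool"
  assumes lf: "loc_finite (supp2 g)"
  shows "\<exists>\<epsilon>>0. \<forall>B. bounded B \<and> x \<in> B \<and> diameter B < \<epsilon> \<longrightarrow> mu_of g B = g x"
proof -
  have "finite (ball x 1 \<inter> supp2 g)" using lf unfolding loc_finite_def by auto
  then obtain d where d: "d > 0" "\<forall>y\<in>ball x 1 \<inter> supp2 g. y \<noteq> x \<longrightarrow> d \<le> dist x y"
    using finite_set_avoid by blast
  define e where "e = min 1 d"
  have "e > 0" using d by (simp add: e_def)
  moreover have "mu_of g B = g x" if B: "bounded B" "x \<in> B" "diameter B < e" for B
  proof -
    have "B \<inter> supp2 g = {x} \<inter> supp2 g"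
    proof (intro equalityI subsetI)
      fix y assume y: "y \<in> B \<inter> supp2 g"
      have "dist x y \<le> diameter B" using diameter_bounded_bound B y by blast
      then have "dist x y < e" using B by simp
      then have "dist x y < d" "dist x y < 1" by (auto simp: e_def)
      then have "y \<in> ball x 1 \<inter> supp2 g" using y by auto
      then have "y = x" using d(2) \<open>dist x y < d\<close> by force
      then show "y \<in> {x} \<inter> supp2 g" using y by blast
    next
      fix y assume "y \<in> {x} \<inter> supp2 g" then show "y \<in> B \<inter> supp2 g" using B by auto
    qed
    then have "mu_of g B = mu_of g {x}" by (simp add: mu_of_def)
    then show ?thesis by (simp add: mu_of_single)
  qed
  ultimately show ?thesis by blast
qed

lemma partA_measure:
  fixes g :: "'a::euclidean_space \<Rightarrow> bool"
  assumes lf: "loc_finite (supp2 g)"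
  shows "b2_measure (mu_of g)"
  unfolding b2_measure_def
proof (intro allI impI conjI)
  fix S :: "nat \<Rightarrow> 'a set"
  assume h: "(\<forall>i. bounded (S i)) \<and> disjoint_family S \<and> bounded (\<Union>i. S i)"
  let ?H = "supp2 g"
  let ?U = "\<Union>i. S i"
  have fU: "finite (?U \<inter> ?H)" using lf h unfolding loc_finite_def by auto
  define I where "I = {i. S i \<inter> ?H \<noteq> {}}"
  define pick where "pick = (\<lambda>i. SOME y. y \<in> S i \<inter> ?H)"
  have pk: "pick i \<in> S i \<inter> ?H" if "i \<in> I" for i
  proof -
    from that obtain y where "y \<in> S i \<inter> ?H" unfolding I_def by blast
    then show ?thesis unfolding pick_def by (rule someI)
  qed
  have inj: "inj_on pick I"
  proof (rule inj_onI)
    fix i j assume ij: "i \<in> I" "j \<in> I" "pick i = pick j"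
    show "i = j"
    proof (rule ccontr)
      assume "i \<noteq> j"
      then have "S i \<inter> S j = {}" using h unfolding disjoint_family_on_def by simp
      moreover have "pick i \<in> S i" "pick i \<in> S j" using pk[OF ij(1)] pk[OF ij(2)] ij(3) by auto
      ultimately show False by blast
    qed
  qed
  have "pick ` I \<subseteq> ?U \<inter> ?H" using pk by blast
  then have "finite (pick ` I)" using fU by (rule finite_subset)
  then have fI: "finite I" using inj by (rule finite_imageD)
  have fin_i: "finite (S i \<inter> ?H)" for i using lf h unfolding loc_finite_def by auto
  have sub: "{i. mu_of g (S i)} = {i\<in>I. odd (card (S i \<inter> ?H))}"
    by (auto simp: mu_of_def par_def I_def)
  show "finite {i. mu_of g (S i)}" using sub fI by simp
  have UH: "?U \<inter> ?H = (\<Union>i\<in>I. S i \<inter> ?H)" by (auto simp: I_def)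
  have "card (?U \<inter> ?H) = (\<Sum>i\<in>I. card (S i \<inter> ?H))"
    unfolding UH
    apply (rule card_UN_disjoint[OF fI])
    using fin_i h unfolding disjoint_family_on_def by blast+
  then show "mu_of g ?U = par (card {i. mu_of g (S i)})"
    using par_sum_count[OF fI, of "\<lambda>i. card (S i \<inter> ?H)"] sub
    by (simp add: mu_of_def par_def)
qed

lemma small_lemma:
  fixes \<mu> :: "'a::euclidean_space set \<Rightarrow> bool"
  assumes m: "b2_measure \<mu>" and r: "r > 0"
    and hx: "\<forall>B. bounded B \<and> x \<in> B \<and> diameter B < 3 * r \<longrightarrow> \<mu> B = \<mu> {x}"
    and B: "B \<subseteq> ball x r"
  shows "\<mu> B = (x \<in> B \<and> \<mu> {x})"
proof -
  have bB: "bounded B" using B bounded_subset bounded_ball by blast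
  have Bx: "B \<union> {x} \<subseteq> ball x r" using B r by auto
  then have "diameter (B \<union> {x}) \<le> 2 * r" using diameter_subset[OF Bx] r by simp
  then have dm: "diameter (B \<union> {x}) < 3 * r" using r by simp
  have bBx: "bounded (B \<union> {x})" using bB by simp
  have e1: "\<mu> (B \<union> {x}) = \<mu> {x}" using hx bBx dm by blast
  show ?thesis
  proof (cases "x \<in> B")
    case True
    then have "B \<union> {x} = B" by auto
    then show ?thesis using e1 True by simp
  next
    case False
    then have "\<mu> (B \<union> {x}) = (\<mu> B \<noteq> \<mu> {x})" using mu_add[OF m bB, of "{x}"] by simp
    then show ?thesis using e1 False by auto
  qed
qed

lemma partB:
  fixes \<mu> :: "'a::euclidean_space set \<Rightarrow> bool"
  assumes m: "b2_measure \<mu>" and d: "b2_derivable \<mu>"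
  shows "loc_finite (supp2 (\<lambda>y. \<mu> {y})) \<and> (\<forall>A. bounded A \<longrightarrow> \<mu> A = mu_of (\<lambda>y. \<mu> {y}) A)"
proof -
  let ?g = "\<lambda>y. \<mu> {y}"
  let ?H = "supp2 ?g"
  have "\<forall>x. \<exists>r>0. \<forall>B. bounded B \<and> x \<in> B \<and> diameter B < 3 * r \<longrightarrow> \<mu> B = \<mu> {x}"
  proof
    fix x
    obtain e a where ea: "e > 0" "\<forall>B. bounded B \<and> x \<in> B \<and> diameter B < e \<longrightarrow> \<mu> B = a"
      using d unfolding b2_derivable_def b2_derivable_at_def by blast
    then have "\<mu> {x} = a" by auto
    then show "\<exists>r>0. \<forall>B. bounded B \<and> x \<in> B \<and> diameter B < 3 * r \<longrightarrow> \<mu> B = \<mu> {x}"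
      using ea by (intro exI[of _ "e/3"]) auto
  qed
  then obtain r where r: "\<And>x. r x > 0"
    and hr: "\<And>x. \<forall>B. bounded B \<and> x \<in> B \<and> diameter B < 3 * r x \<longrightarrow> \<mu> B = \<mu> {x}"
    by metis
  have sm: "\<mu> B = (x \<in> B \<and> \<mu> {x})" if "B \<subseteq> ball x (r x)" for x B
    using small_lemma[OF m r hr that] .
  have Hb: "ball x (r x) \<inter> ?H \<subseteq> {x}" for x
  proof
    fix y assume y: "y \<in> ball x (r x) \<inter> ?H"
    then have "\<mu> {y}" by (simp add: supp2_def)
    moreover have "\<mu> {y} = (x \<in> {y} \<and> \<mu> {x})" using sm[of "{y}" x] y by auto
    ultimately show "y \<in> {x}" by auto
  qed
  have cover: "\<exists>F. finite F \<and> A \<subseteq> (\<Union>x\<in>F. ball x (r x))" if "bounded A" for A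
  proof -
    have "compact (closure A)" using that by (simp add: compact_closure)
    moreover have "closure A \<subseteq> (\<Union>x\<in>closure A. ball x (r x))" using r by auto
    ultimately obtain F where "F \<subseteq> closure A" "finite F" "closure A \<subseteq> (\<Union>x\<in>F. ball x (r x))"
      using compactE_image[of "closure A" "closure A" "\<lambda>x. ball x (r x)"] by blast
    then show ?thesis using closure_subset by blast
  qed
  have lf: "loc_finite ?H"
    unfolding loc_finite_def
  proof (intro allI impI)
    fix A :: "'a set" assume "bounded A"
    then obtain F where F: "finite F" "A \<subseteq> (\<Union>x\<in>F. ball x (r x))" using cover by blast
    then have "A \<inter> ?H \<subseteq> F" using Hb by blast
    then show "finite (A \<inter> ?H)" using F finite_subset by blast
  qed
  have Qsmall: "\<mu> B = mu_of ?g B" if "B \<subseteq> ball x (r x)" for x B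
  proof -
    have "B \<inter> ?H = (if x \<in> B \<and> \<mu> {x} then {x} else {})"
      using Hb[of x] that by (auto simp: supp2_def)
    then show ?thesis using sm[OF that] by (simp add: mu_of_def par_def)
  qed
  have ind: "\<forall>A. bounded A \<longrightarrow> \<mu> (A \<inter> (\<Union>x\<in>F. ball x (r x))) = mu_of ?g (A \<inter> (\<Union>x\<in>F. ball x (r x)))"
    if "finite F" for F
    using that
  proof (induction F rule: finite_induct)
    case empty
    then show ?case using mu_empty[OF m] by (simp add: mu_of_def par_def)
  next
    case (insert x F)
    show ?case
    proof (intro allI impI)
      fix A :: "'a set" assume bA: "bounded A"
      let ?U = "\<Union>x\<in>F. ball x (r x)"
      have eq: "A \<inter> (\<Union>x\<in>insert x F. ball x (r x)) = (A \<inter> ?U) \<union> (A \<inter> ball x (r x) - ?U)" by auto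
      have b1: "bounded (A \<inter> ?U)" using bA by (simp add: bounded_Int)
      have b2: "bounded (A \<inter> ball x (r x) - ?U)" using bA by (meson Diff_subset bounded_Int bounded_subset)
      have dj: "(A \<inter> ?U) \<inter> (A \<inter> ball x (r x) - ?U) = {}" by auto
      have "\<mu> (A \<inter> ball x (r x) - ?U) = mu_of ?g (A \<inter> ball x (r x) - ?U)"
        by (rule Qsmall[of _ x]) auto
      then show "\<mu> (A \<inter> (\<Union>x\<in>insert x F. ball x (r x))) = mu_of ?g (A \<inter> (\<Union>x\<in>insert x F. ball x (r x)))"
        unfolding eq using mu_add[OF m b1 b2 dj] mu_of_add[OF lf b1 b2 dj] insert.IH bA by simp
    qed
  qed
  have "\<mu> A = mu_of ?g A" if bA: "bounded A" for A
  proof -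
    obtain F where F: "finite F" "A \<subseteq> (\<Union>x\<in>F. ball x (r x))" using cover[OF bA] by blast
    then have "A \<inter> (\<Union>x\<in>F. ball x (r x)) = A" by auto
    then show ?thesis using ind[OF F(1)] bA by metis
  qed
  then show ?thesis using lf by blast
qed

theorem theorem5p17:
  shows "(\<forall>g :: 'a::euclidean_space \<Rightarrow> bool. loc_finite (supp2 g) \<longrightarrow>
            b2_measure (mu_of g) \<and> b2_derivable (mu_of g) \<and> (\<forall>x. b2_deriv (mu_of g) x = g x))
       \<and> (\<forall>\<mu> :: 'a set \<Rightarrow> bool. b2_measure \<mu> \<and> b2_derivable \<mu> \<longrightarrow>
            (\<exists>!g. loc_finite (supp2 g) \<and> (\<forall>A. bounded A \<longrightarrow> \<mu> A = mu_of g A))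
          \<and> (\<forall>g. loc_finite (supp2 g) \<and> (\<forall>A. bounded A \<longrightarrow> \<mu> A = mu_of g A)
                 \<longrightarrow> (\<forall>x. b2_deriv \<mu> x = g x)))"
proof (intro conjI allI impI)
  fix g :: "'a \<Rightarrow> bool" assume lf: "loc_finite (supp2 g)"
  show "b2_measure (mu_of g)" using partA_measure[OF lf] .
  show "b2_derivable (mu_of g)"
    unfolding b2_derivable_def b2_derivable_at_def using partA_deriv[OF lf] by blast
  fix x
  obtain e where "e > 0" "\<forall>B. bounded B \<and> x \<in> B \<and> diameter B < e \<longrightarrow> mu_of g B = g x"
    using partA_deriv[OF lf] by blast
  then show "b2_deriv (mu_of g) x = g x" by (rule deriv_eq)
next
  fix \<mu> :: "'a set \<Rightarrow> bool" assume h: "b2_measure \<mu> \<and> b2_derivable \<mu>"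
  show "\<exists>!g. loc_finite (supp2 g) \<and> (\<forall>A. bounded A \<longrightarrow> \<mu> A = mu_of g A)"
  proof (rule ex1I)
    show "loc_finite (supp2 (\<lambda>y. \<mu> {y})) \<and> (\<forall>A. bounded A \<longrightarrow> \<mu> A = mu_of (\<lambda>y. \<mu> {y}) A)"
      using partB h by blast
  next
    fix g assume "loc_finite (supp2 g) \<and> (\<forall>A. bounded A \<longrightarrow> \<mu> A = mu_of g A)"
    then have "\<mu> {x} = g x" for x using mu_of_single[of g x] by simp
    then show "g = (\<lambda>y. \<mu> {y})" by auto
  qed
next
  fix \<mu> :: "'a set \<Rightarrow> bool" and g x
  assume g: "loc_finite (supp2 g) \<and> (\<forall>A. bounded A \<longrightarrow> \<mu> A = mu_of g A)"
  obtain e where "e > 0" "\<forall>B. bounded B \<and> x \<in> B \<and> diameter B < e \<longrightarrow> mu_of g B = g x"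
    using partA_deriv g by blast
  then have "\<forall>B. bounded B \<and> x \<in> B \<and> diameter B < e \<longrightarrow> \<mu> B = g x" using g by auto
  then show "b2_deriv \<mu> x = g x" using \<open>e > 0\<close> by (rule deriv_eq[rotated])
qed

end
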